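(* Let $E, F, G$ be Banach lattices. (1) The set of almost Grothendieck operators from $E$ to $F$ is a closed linear subspace of $L(E;F)$, and if $T: E \to F$ is almost Grothendieck and $S: H \to E$ is any bounded linear operator from a Banach space $H$, then $T \circ S$ is almost Grothendieck. (2) If $T: E \to F$ is almost Grothendieck and $R: F \to G$ is a bounded operator whose adjoint $R': G' \to F'$ maps disjoint sequences to disjoint sequences, then $R \circ T: E \to G$ is almost Grothendieck.
   Context: A bounded operator $T: X \to F$ from a Banach space $X$ to a Banach lattice $F$ is almost Grothendieck if $T'y_n' \to 0$ weakly in $X'$ for every disjoint weak* null sequence $(y_n')$ in the dual Banach lattice $F'$. $L(E;F)$ denotes the Banach space of bounded linear operators with the operator norm. *)

theory Defs
  imports "HOL-Analysis.Analysis"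
begin

definition labs :: "'a::{lattice, uminus} \<Rightarrow> 'a" where
  "labs x = sup x (- x)"

class banach_lattice = banach + ordered_real_vector + lattice +
  assumes lattice_norm: "sup x (- x) \<le> sup y (- y) \<Longrightarrow> norm x \<le> norm y"

text \<open>Modulus of a functional f in the dual lattice F', evaluated at y \<ge> 0
  (Riesz--Kantorovich): |f|(y) = sup { f z : |z| \<le> y }.\<close>
definition dual_abs :: "('b::banach_lattice \<Rightarrow>\<^sub>L real) \<Rightarrow> 'b \<Rightarrow> real" where
  "dual_abs f y = Sup {f z | z. labs z \<le> y}"

text \<open>Disjointness in the dual Banach lattice F': |f| \<and> |g| = 0, i.e. for all x \<ge> 0,
  (|f| \<and> |g|)(x) = inf { |f|(y) + |g|(x - y) : 0 \<le> y \<le> x } = 0.\<close>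
definition dual_disjoint :: "('b::banach_lattice \<Rightarrow>\<^sub>L real) \<Rightarrow> ('b \<Rightarrow>\<^sub>L real) \<Rightarrow> bool" where
  "dual_disjoint f g \<longleftrightarrow>
     (\<forall>x. 0 \<le> x \<longrightarrow> Inf {dual_abs f y + dual_abs g (x - y) | y. 0 \<le> y \<and> y \<le> x} = 0)"

definition disjoint_seq :: "(nat \<Rightarrow> ('b::banach_lattice \<Rightarrow>\<^sub>L real)) \<Rightarrow> bool" where
  "disjoint_seq y \<longleftrightarrow> (\<forall>n m. n \<noteq> m \<longrightarrow> dual_disjoint (y n) (y m))"

definition weak_star_null :: "(nat \<Rightarrow> ('b::real_normed_vector \<Rightarrow>\<^sub>L real)) \<Rightarrow> bool" where
  "weak_star_null y \<longleftrightarrow> (\<forall>x. (\<lambda>n. y n x) \<longlonglongrightarrow> 0)"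

definition weakly_null :: "(nat \<Rightarrow> 'v::real_normed_vector) \<Rightarrow> bool" where
  "weakly_null v \<longleftrightarrow> (\<forall>\<phi> :: 'v \<Rightarrow>\<^sub>L real. (\<lambda>n. \<phi> (v n)) \<longlonglongrightarrow> 0)"

text \<open>The adjoint T' y' = y' \<circ> T.\<close>
definition almost_grothendieck :: "('a::banach \<Rightarrow>\<^sub>L 'b::banach_lattice) \<Rightarrow> bool" where
  "almost_grothendieck T \<longleftrightarrow>
     (\<forall>y. disjoint_seq y \<and> weak_star_null y \<longrightarrow> weakly_null (\<lambda>n. y n o\<^sub>L T))"

definition adjoint_preserves_disjoint :: "('b::banach_lattice \<Rightarrow>\<^sub>L 'c::banach_lattice) \<Rightarrow> bool" where
  "adjoint_preserves_disjoint R \<longleftrightarrow>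
     (\<forall>g. disjoint_seq g \<longrightarrow> disjoint_seq (\<lambda>n. g n o\<^sub>L R))"

end

theory Submission
  imports Defs
begin

lemma ubp:
  fixes y :: "nat \<Rightarrow> ('a::banach \<Rightarrow>\<^sub>L real)"
  assumes pb: "\<And>x. \<exists>B. \<forall>n. \<bar>y n x\<bar> \<le> B"
  shows "\<exists>B. \<forall>n. norm (y n) \<le> B"
proof -
  define A where "A k = {x. \<forall>n. \<bar>y n x\<bar> \<le> real k}" for k :: nat
  have clA: "closed (A k)" for k
  proof -
    have "A k = (\<Inter>n. {x. \<bar>y n x\<bar> \<le> real k})" unfolding A_def by auto
    moreover have "closed {x. \<bar>y n x\<bar> \<le> real k}" for n
      by (intro closed_Collect_le continuous_intros) 
    ultimately show ?thesis by auto
  qed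
  have un: "\<Union>(range A) = UNIV"
  proof safe
    fix x
    obtain B where "\<forall>n. \<bar>y n x\<bar> \<le> B" using pb by blast
    moreover obtain k where "B \<le> real k" using real_arch_simple by blast
    ultimately have "x \<in> A k" unfolding A_def using order_trans by blast
    then show "x \<in> \<Union>(range A)" by blast
  qed (rule UNIV_I)
  have "\<exists>k. interior (A k) \<noteq> {}"
  proof (rule ccontr)
    assume "\<not> ?thesis"
    then have ie: "\<And>k. interior (A k) = {}" by blast
    have "euclidean interior_of \<Union>(range A) = {}"
    proof (rule Baire_category_alt)
      show "completely_metrizable_space (euclidean :: 'a topology) \<or> locally_compact_space euclidean \<and> regular_space euclidean"
        by (rule disjI1, rule completely_metrizable_space_euclidean)
      show "countable (range A)" by simp
      fix T assume "T \<in> range A"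
      then obtain k where Tk: "T = A k" by (rule rangeE)
      show "closedin euclidean T \<and> euclidean interior_of T = {}"
        unfolding Tk euclidean_interior_of
        using closed_closedin[THEN iffD1, OF clA[of k]] ie[of k] by (rule conjI)
    qed
    then show False using un by simp
  qed
  then obtain k x0 where "x0 \<in> interior (A k)" by blast
  then obtain r where r: "r > 0" "ball x0 r \<subseteq> A k"
  proof -
    obtain r where "r > 0" "ball x0 r \<subseteq> interior (A k)"
      using \<open>x0 \<in> interior (A k)\<close> open_contains_ball open_interior by blast
    then show ?thesis using interior_subset that by blast
  qed
  have "norm (y n) \<le> 4 * real k / r" for n
  proof (rule norm_blinfun_bound)
    show "0 \<le> 4 * real k / r" using r by simp
    fix z
    show "norm (y n z) \<le> 4 * real k / r * norm z"
    proof (cases "z = 0")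
      case True then show ?thesis by (simp add: blinfun.zero_right)
    next
      case False
      define w where "w = (r/2/norm z) *\<^sub>R z"
      have nw: "norm w = r/2" using False r by (simp add: w_def)
      have "x0 + w \<in> A k" using r nw by (intro subsetD[OF r(2)]) (auto simp: dist_norm)
      moreover have "x0 \<in> A k" using r by (intro subsetD[OF r(2)]) auto
      ultimately have "\<bar>y n (x0 + w)\<bar> \<le> real k" "\<bar>y n x0\<bar> \<le> real k" unfolding A_def by auto
      then have yw: "\<bar>y n w\<bar> \<le> 2 * real k" by (simp add: blinfun.add_right)
      have "y n z = (2 * norm z / r) * y n w"
        using False r by (simp add: w_def blinfun.scaleR_right)
      then have "\<bar>y n z\<bar> = (2 * norm z / r) * \<bar>y n w\<bar>" using r by (simp add: abs_mult)
      also have "\<dots> \<le> (2 * norm z / r) * (2 * real k)"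
        using yw r by (intro mult_left_mono) auto
      also have "\<dots> = 4 * real k / r * norm z" by simp
      finally show ?thesis by simp
    qed
  qed
  then show ?thesis by blast
qed

lemma comp_right_bl: "bounded_linear (\<lambda>A. A o\<^sub>L S)"
  by (rule bounded_bilinear.bounded_linear_left[OF bounded_bilinear_blinfun_compose])

lemma blinfun_compose_assoc: "(a o\<^sub>L b) o\<^sub>L c = a o\<^sub>L (b o\<^sub>L c)"
  by (rule blinfun_eqI) simp

lemma ag_zero: "almost_grothendieck (0 :: 'e::banach \<Rightarrow>\<^sub>L 'f::banach_lattice)"
  unfolding almost_grothendieck_def weakly_null_def
  by (simp add: blinfun.zero_right)

lemma ag_add:
  fixes S T :: "'e::banach \<Rightarrow>\<^sub>L 'f::banach_lattice"
  assumes hS: "almost_grothendieck S" and hT: "almost_grothendieck T"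
  shows "almost_grothendieck (S + T)"
  unfolding almost_grothendieck_def weakly_null_def
proof (intro allI impI)
  fix y :: "nat \<Rightarrow> 'f \<Rightarrow>\<^sub>L real" and \<phi> :: "('e \<Rightarrow>\<^sub>L real) \<Rightarrow>\<^sub>L real"
  assume h: "disjoint_seq y \<and> weak_star_null y"
  have a: "(\<lambda>n. \<phi> (y n o\<^sub>L S)) \<longlonglongrightarrow> 0" using hS h unfolding almost_grothendieck_def weakly_null_def by blast
  have b: "(\<lambda>n. \<phi> (y n o\<^sub>L T)) \<longlonglongrightarrow> 0" using hT h unfolding almost_grothendieck_def weakly_null_def by blast
  have "(\<lambda>n. \<phi> (y n o\<^sub>L S) + \<phi> (y n o\<^sub>L T)) \<longlonglongrightarrow> 0 + 0"
    by (rule tendsto_add[OF a b])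
  then show "(\<lambda>n. \<phi> (y n o\<^sub>L (S + T))) \<longlonglongrightarrow> 0"
    by (simp add: bounded_bilinear.add_right[OF bounded_bilinear_blinfun_compose] blinfun.add_right)
qed

lemma ag_scale:
  fixes T :: "'e::banach \<Rightarrow>\<^sub>L 'f::banach_lattice"
  assumes hT: "almost_grothendieck T"
  shows "almost_grothendieck (c *\<^sub>R T)"
  unfolding almost_grothendieck_def weakly_null_def
proof (intro allI impI)
  fix y :: "nat \<Rightarrow> 'f \<Rightarrow>\<^sub>L real" and \<phi> :: "('e \<Rightarrow>\<^sub>L real) \<Rightarrow>\<^sub>L real"
  assume h: "disjoint_seq y \<and> weak_star_null y"
  have b: "(\<lambda>n. \<phi> (y n o\<^sub>L T)) \<longlonglongrightarrow> 0" using hT h unfolding almost_grothendieck_def weakly_null_def by blast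
  have "(\<lambda>n. c * \<phi> (y n o\<^sub>L T)) \<longlonglongrightarrow> c * 0"
    by (rule tendsto_mult[OF tendsto_const b])
  then show "(\<lambda>n. \<phi> (y n o\<^sub>L (c *\<^sub>R T))) \<longlonglongrightarrow> 0"
    by (simp add: bounded_bilinear.scaleR_right[OF bounded_bilinear_blinfun_compose] blinfun.scaleR_right)
qed

theorem mainTheorem12:
  shows "closed {T :: 'e::banach_lattice \<Rightarrow>\<^sub>L 'f::banach_lattice. almost_grothendieck T}
    \<and> subspace {T :: 'e \<Rightarrow>\<^sub>L 'f. almost_grothendieck T}
    \<and> (\<forall>(T :: 'e \<Rightarrow>\<^sub>L 'f) (S :: 'h::banach \<Rightarrow>\<^sub>L 'e).
          almost_grothendieck T \<longrightarrow> almost_grothendieck (T o\<^sub>L S))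
    \<and> (\<forall>(T :: 'e \<Rightarrow>\<^sub>L 'f) (R :: 'f \<Rightarrow>\<^sub>L 'g::banach_lattice).
          almost_grothendieck T \<and> adjoint_preserves_disjoint R \<longrightarrow> almost_grothendieck (R o\<^sub>L T))"
proof (intro conjI allI impI)
  show "closed {T :: 'e \<Rightarrow>\<^sub>L 'f. almost_grothendieck T}"
  proof (rule closed_sequential_limits[THEN iffD2], intro allI impI, elim conjE)
    fix Tk :: "nat \<Rightarrow> 'e \<Rightarrow>\<^sub>L 'f" and T
    assume ag: "\<forall>k. Tk k \<in> {T. almost_grothendieck T}" and lim: "Tk \<longlonglongrightarrow> T"
    show "T \<in> {T. almost_grothendieck T}"
      unfolding mem_Collect_eq almost_grothendieck_def weakly_null_def
    proof (intro allI impI, elim conjE)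
      fix y :: "nat \<Rightarrow> 'f \<Rightarrow>\<^sub>L real" and \<phi> :: "('e \<Rightarrow>\<^sub>L real) \<Rightarrow>\<^sub>L real"
      assume dj: "disjoint_seq y" and ws: "weak_star_null y"
      have "\<exists>B. \<forall>n. norm (y n) \<le> B"
      proof (rule ubp)
        fix x
        have "(\<lambda>n. y n x) \<longlonglongrightarrow> 0" using ws unfolding weak_star_null_def by blast
        then have "bounded (range (\<lambda>n. y n x))" by (rule convergent_imp_bounded)
        then obtain B where "\<forall>n. norm (y n x) \<le> B" by (auto simp: bounded_iff)
        then show "\<exists>B. \<forall>n. \<bar>y n x\<bar> \<le> B" by auto
      qed
      then obtain B where B: "\<And>n. norm (y n) \<le> B" by blast
      have B0: "0 \<le> B" using B[of 0] norm_ge_zero order_trans by blast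
      have conv: "(\<lambda>n. \<phi> (y n o\<^sub>L Tk k)) \<longlonglongrightarrow> 0" for k
        using ag dj ws unfolding almost_grothendieck_def weakly_null_def by blast
      show "(\<lambda>n. \<phi> (y n o\<^sub>L T)) \<longlonglongrightarrow> 0"
      proof (rule LIMSEQ_I)
        fix e :: real assume e: "0 < e"
        define c where "c = (norm \<phi> + 1) * (B + 1)"
        have c: "c > 0" unfolding c_def
          by (rule mult_pos_pos) (use B0 norm_ge_zero[of \<phi>] in linarith)+
        obtain k where k: "norm (Tk k - T) < e / 2 / c"
          using LIMSEQ_D[OF lim, of "e/2/c"] e c by (auto simp: dist_norm)
        obtain N where N: "\<And>n. n \<ge> N \<Longrightarrow> norm (\<phi> (y n o\<^sub>L Tk k)) < e/2"
          using LIMSEQ_D[OF conv[of k], of "e/2"] e by auto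
        show "\<exists>N. \<forall>n\<ge>N. norm (\<phi> (y n o\<^sub>L T) - 0) < e"
        proof (intro exI allI impI)
          fix n assume n: "n \<ge> N"
          have eq: "\<phi> (y n o\<^sub>L T) = \<phi> (y n o\<^sub>L Tk k) - \<phi> (y n o\<^sub>L (Tk k - T))"
            by (simp add: bounded_bilinear.diff_right[OF bounded_bilinear_blinfun_compose]
                  blinfun.diff_right)
          have "norm (\<phi> (y n o\<^sub>L (Tk k - T))) \<le> norm \<phi> * (norm (y n) * norm (Tk k - T))"
            using norm_blinfun[of \<phi> "y n o\<^sub>L (Tk k - T)"]
              mult_left_mono[OF norm_blinfun_compose[of "y n" "Tk k - T"] norm_ge_zero[of \<phi>]]
            by linarith
          also have "\<dots> \<le> (norm \<phi> + 1) * ((B + 1) * norm (Tk k - T))"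
            using B[of n] B0 by (intro mult_mono mult_right_mono) auto
          also have "\<dots> = c * norm (Tk k - T)" by (simp add: c_def)
          also have "\<dots> \<le> c * (e/2/c)" using k c by (intro mult_left_mono) auto
          also have "\<dots> = e/2" using c by simp
          finally have "norm (\<phi> (y n o\<^sub>L (Tk k - T))) \<le> e/2" .
          then show "norm (\<phi> (y n o\<^sub>L T) - 0) < e"
            using N[OF n] eq norm_triangle_ineq4[of "\<phi> (y n o\<^sub>L Tk k)" "\<phi> (y n o\<^sub>L (Tk k - T))"]
            by simp
        qed
      qed
    qed
  qed
next
  show "subspace {T :: 'e \<Rightarrow>\<^sub>L 'f. almost_grothendieck T}"
    unfolding subspace_def using ag_zero ag_add ag_scale by blast
next
  fix T :: "'e \<Rightarrow>\<^sub>L 'f" and S :: "'h \<Rightarrow>\<^sub>L 'e"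
  assume ag: "almost_grothendieck T"
  show "almost_grothendieck (T o\<^sub>L S)"
    unfolding almost_grothendieck_def weakly_null_def
  proof (intro allI impI)
    fix y :: "nat \<Rightarrow> 'f \<Rightarrow>\<^sub>L real" and \<phi> :: "('h \<Rightarrow>\<^sub>L real) \<Rightarrow>\<^sub>L real"
    assume h: "disjoint_seq y \<and> weak_star_null y"
    define \<psi> where "\<psi> = \<phi> o\<^sub>L Blinfun (\<lambda>A. A o\<^sub>L S)"
    have "(\<lambda>n. \<psi> (y n o\<^sub>L T)) \<longlonglongrightarrow> 0" using ag h unfolding almost_grothendieck_def weakly_null_def by blast
    then show "(\<lambda>n. \<phi> (y n o\<^sub>L (T o\<^sub>L S))) \<longlonglongrightarrow> 0"
      by (simp add: \<psi>_def bounded_linear_Blinfun_apply[OF comp_right_bl] blinfun_compose_assoc)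
  qed
next
  fix T :: "'e \<Rightarrow>\<^sub>L 'f" and R :: "'f \<Rightarrow>\<^sub>L 'g"
  assume h: "almost_grothendieck T \<and> adjoint_preserves_disjoint R"
  show "almost_grothendieck (R o\<^sub>L T)"
    unfolding almost_grothendieck_def
  proof (intro allI impI)
    fix y :: "nat \<Rightarrow> 'g \<Rightarrow>\<^sub>L real"
    assume hy: "disjoint_seq y \<and> weak_star_null y"
    have "disjoint_seq (\<lambda>n. y n o\<^sub>L R)" using h hy unfolding adjoint_preserves_disjoint_def by blast
    moreover have "weak_star_null (\<lambda>n. y n o\<^sub>L R)" using hy unfolding weak_star_null_def by simp
    ultimately have "weakly_null (\<lambda>n. (y n o\<^sub>L R) o\<^sub>L T)" using h unfolding almost_grothendieck_def by blast
    then show "weakly_null (\<lambda>n. y n o\<^sub>L (R o\<^sub>L T))" by (simp add: blinfun_compose_assoc)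
  qed
qed

end
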